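(* There exists an instance of $P_n\,|\,\mathrm{conc}, p_j=1\,|\,L_{\max}$ whose conflict graph $G$ has treewidth $1$ and in which every optimal schedule has makespan $C_{\max}=\log n+1$, where $n$ is the number of jobs.
   Context: In $P_n\,|\,\mathrm{conc}, p_j=1\,|\,L_{\max}$, jobs $\{1,\dots,n\}$ have processing time $1$, release time $0$ and integer due dates $d_j$; there is a conflict graph $G$ on the jobs, and a schedule $C:\{1,\dots,n\}\to\mathbb{N}_{\ge1}$ is feasible iff $C(i)\ne C(j)$ for every edge $\{i,j\}$ of $G$. The objective $L_{\max}=\max_j (C_j-d_j)$ is minimized; $C_{\max}=\max_j C_j$. $\log$ is base $2$. *)

theory Defs
  imports Complex_Main
begin

definition simple_graph :: "'a set \<Rightarrow> 'a set set \<Rightarrow> bool" where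
  "simple_graph V E \<longleftrightarrow> finite V \<and> (\<forall>e\<in>E. e \<subseteq> V \<and> card e = 2)"

definition connected_in :: "'a set set \<Rightarrow> 'a set \<Rightarrow> bool" where
  "connected_in F S \<longleftrightarrow>
     (\<forall>u\<in>S. \<forall>v\<in>S. (u, v) \<in> {(a, b). a \<in> S \<and> b \<in> S \<and> {a, b} \<in> F}\<^sup>*)"

definition is_tree :: "'a set \<Rightarrow> 'a set set \<Rightarrow> bool" where
  "is_tree I F \<longleftrightarrow> simple_graph I F \<and> I \<noteq> {} \<and> connected_in F I \<and>
     (\<forall>e\<in>F. \<not> connected_in (F - {e}) I)"

definition tree_decomposition :: "'a set \<Rightarrow> 'a set set \<Rightarrow> nat set \<Rightarrow> nat set set \<Rightarrow> (nat \<Rightarrow> 'a set) \<Rightarrow> bool" where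
  "tree_decomposition V E I F B \<longleftrightarrow>
     is_tree I F \<and> (\<forall>t\<in>I. finite (B t) \<and> B t \<subseteq> V) \<and>
     (\<forall>v\<in>V. \<exists>t\<in>I. v \<in> B t) \<and>
     (\<forall>e\<in>E. \<exists>t\<in>I. e \<subseteq> B t) \<and>
     (\<forall>v\<in>V. connected_in F {t\<in>I. v \<in> B t})"

definition treewidth :: "'a set \<Rightarrow> 'a set set \<Rightarrow> nat" where
  "treewidth V E = (LEAST w. \<exists>I F B. tree_decomposition V E I F B \<and> (\<forall>t\<in>I. card (B t) \<le> w + 1))"

text \<open>Scheduling: jobs are 1..n, C j is the completion time of job j.\<close>
definition feasible_schedule :: "nat \<Rightarrow> nat set set \<Rightarrow> (nat \<Rightarrow> nat) \<Rightarrow> bool" where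
  "feasible_schedule n E C \<longleftrightarrow>
     (\<forall>j\<in>{1..n}. C j \<ge> 1) \<and> (\<forall>i j. {i, j} \<in> E \<longrightarrow> C i \<noteq> C j)"

definition Lmax :: "nat \<Rightarrow> (nat \<Rightarrow> int) \<Rightarrow> (nat \<Rightarrow> nat) \<Rightarrow> int" where
  "Lmax n d C = Max ((\<lambda>j. int (C j) - d j) ` {1..n})"

definition Cmax :: "nat \<Rightarrow> (nat \<Rightarrow> nat) \<Rightarrow> nat" where
  "Cmax n C = Max (C ` {1..n})"

definition optimal_schedule :: "nat \<Rightarrow> nat set set \<Rightarrow> (nat \<Rightarrow> int) \<Rightarrow> (nat \<Rightarrow> nat) \<Rightarrow> bool" where
  "optimal_schedule n E d C \<longleftrightarrow> feasible_schedule n E C \<and>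
     (\<forall>C'. feasible_schedule n E C' \<longrightarrow> Lmax n d C \<le> Lmax n d C')"

end

theory Submission
  imports Defs
begin
lemma funpow_ge: "(\<forall>t::nat. t \<le> q t) \<Longrightarrow> x \<le> (q ^^ m) x"
  by (induction m) (auto intro: order_trans)

lemma parent_tree:
  fixes q :: "nat \<Rightarrow> nat"
  assumes fin: "finite I" and r: "r \<in> I" and q: "\<forall>t\<in>I-{r}. q t \<in> I \<and> t < q t"
    and mono: "\<forall>t. t \<le> q t"
    and F: "F = (\<lambda>t. {t, q t}) ` (I - {r})"
  shows "is_tree I F"
proof -
  have sg: "simple_graph I F"
    unfolding simple_graph_def F using fin q r by (force simp: card_insert_if)
  define R where "R = {(a, b). a \<in> I \<and> b \<in> I \<and> {a, b} \<in> F}"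
  have step: "\<forall>t\<in>I. Max I - t \<le> m \<longrightarrow> (t, r) \<in> R\<^sup>* \<and> (r, t) \<in> R\<^sup>*" for m
  proof (induction m)
    case 0
    show ?case
    proof (intro ballI impI)
      fix t assume t: "t \<in> I" "Max I - t \<le> 0"
      have "t \<le> Max I" using fin t by simp
      have "t = r"
      proof (rule ccontr)
        assume "t \<noteq> r"
        then have "q t \<in> I" "t < q t" using q t by auto
        then have "q t \<le> Max I" using fin by simp
        then show False using t \<open>t < q t\<close> by simp
      qed
      then show "(t, r) \<in> R\<^sup>* \<and> (r, t) \<in> R\<^sup>*" by simp
    qed
  next
    case (Suc m)
    show ?case
    proof (intro ballI impI)
      fix t assume t: "t \<in> I" "Max I - t \<le> Suc m"
      show "(t, r) \<in> R\<^sup>* \<and> (r, t) \<in> R\<^sup>*"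
      proof (cases "t = r")
        case True then show ?thesis by simp
      next
        case False
        then have qt: "q t \<in> I" "t < q t" using q t by auto
        then have "q t \<le> Max I" using fin by simp
        then have "Max I - q t \<le> m" using t qt by linarith
        then have ih: "(q t, r) \<in> R\<^sup>* \<and> (r, q t) \<in> R\<^sup>*" using Suc qt by blast
        have e: "{t, q t} \<in> F" using F t False by auto
        have "(t, q t) \<in> R" "(q t, t) \<in> R" using e t qt unfolding R_def by (auto simp: insert_commute)
        then show ?thesis using ih
          by (meson converse_rtrancl_into_rtrancl rtrancl_into_rtrancl)
      qed
    qed
  qed
  have conn: "connected_in F I"
    unfolding connected_in_def
  proof (intro ballI)
    fix u v assume "u \<in> I" "v \<in> I"
    then have "(u, r) \<in> R\<^sup>*" "(r, v) \<in> R\<^sup>*" using step by auto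
    then show "(u, v) \<in> {(a, b). a \<in> I \<and> b \<in> I \<and> {a, b} \<in> F}\<^sup>*"
      unfolding R_def by (meson rtrancl_trans)
  qed
  have bridge: "\<not> connected_in (F - {e}) I" if e: "e \<in> F" for e
  proof
    assume c: "connected_in (F - {e}) I"
    obtain u where u: "u \<in> I - {r}" "e = {u, q u}" using e F by auto
    have qu: "q u \<in> I" "u < q u" using q u by auto
    define D where "D = {w. \<exists>m. (q ^^ m) w = u}"
    define R' where "R' = {(a, b). a \<in> I \<and> b \<in> I \<and> {a, b} \<in> F - {e}}"
    have path: "(u, q u) \<in> R'\<^sup>*" using c u qu unfolding connected_in_def R'_def by auto
    have inv: "(a, b) \<in> R'\<^sup>* \<Longrightarrow> a \<in> D \<Longrightarrow> b \<in> D" for a b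
    proof (induction rule: rtrancl_induct)
      case base then show ?case .
    next
      case (step b c)
      then have bc: "{b, c} \<in> F" "{b, c} \<noteq> {u, q u}" using u unfolding R'_def by auto
      then obtain w where w: "w \<in> I - {r}" "{b, c} = {w, q w}" using F by auto
      from w(2) have "(b = w \<and> c = q w) \<or> (b = q w \<and> c = w)" by (auto simp: doubleton_eq_iff)
      then show ?case
      proof
        assume h: "b = w \<and> c = q w"
        obtain m where m: "(q ^^ m) b = u" using step.IH step.prems by (auto simp: D_def)
        show ?thesis
        proof (cases m)
          case 0 then show ?thesis using m h bc w by auto
        next
          case (Suc m')
          then have "(q ^^ m') (q b) = u" using m by (simp del: funpow.simps add: funpow_Suc_right)
          then show ?thesis using h by (auto simp: D_def)
        qed
      next
        assume h: "b = q w \<and> c = w"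
        obtain m where m: "(q ^^ m) b = u" using step.IH step.prems by (auto simp: D_def)
        then have "(q ^^ Suc m) c = u" using h by (simp del: funpow.simps add: funpow_Suc_right)
        then show ?thesis unfolding D_def by blast
      qed
    qed
    have "u \<in> D" unfolding D_def by (simp add: exI[of _ 0])
    then have "q u \<in> D" using inv path by blast
    then obtain m where "(q ^^ m) (q u) = u" by (auto simp: D_def)
    moreover have "q u \<le> (q ^^ m) (q u)" using funpow_ge mono by blast
    ultimately show False using qu by simp
  qed
  show ?thesis unfolding is_tree_def using sg r conn bridge by auto
qed

fun tz :: "nat \<Rightarrow> nat" where
  "tz v = (if v = 0 \<or> odd v then 0 else Suc (tz (v div 2)))"

declare tz.simps[simp del]

lemma tz_eq: "odd m \<Longrightarrow> tz (2 ^ i * m) = i"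
proof (induction i)
  case 0 then show ?case by (simp add: tz.simps)
next
  case (Suc i)
  have "m \<noteq> 0" using Suc.prems by (metis even_zero)
  then have "2 ^ Suc i * m \<noteq> 0" "even (2 ^ Suc i * m)" by auto
  then show ?case using Suc by (subst tz.simps) auto
qed

lemma tz_decomp: "v > 0 \<Longrightarrow> \<exists>m. odd m \<and> v = 2 ^ tz v * m"
proof (induction v rule: tz.induct)
  case (1 v)
  show ?case
  proof (cases "odd v")
    case True then show ?thesis by (simp add: tz.simps)
  next
    case False
    then have "v div 2 > 0" using 1 by auto
    then obtain m where "odd m" "v div 2 = 2 ^ tz (v div 2) * m" using 1 False by auto
    moreover have "tz v = Suc (tz (v div 2))" using False 1 by (simp add: tz.simps)
    ultimately show ?thesis using False by (metis dvd_mult_div_cancel mult.assoc power_Suc)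
  qed
qed

lemma tz_le: assumes "0 < v" "v \<le> 2 ^ k" shows "tz v \<le> k"
proof -
  obtain m where m: "odd m" "v = 2 ^ tz v * m" using tz_decomp assms by blast
  then have "m \<ge> 1" by (cases m) auto
  then have "2 ^ tz v \<le> v" using m(2) by (metis mult.right_neutral mult_le_mono2)
  then have "(2::nat) ^ tz v \<le> 2 ^ k" using assms by linarith
  then show ?thesis by simp
qed

definition par :: "nat \<Rightarrow> nat" where "par v = v + 2 ^ tz v"

lemma par_le: assumes "0 < v" "v < 2 ^ k" shows "par v \<le> 2 ^ k"
proof -
  obtain m where m: "odd m" "v = 2 ^ tz v * m" using tz_decomp assms by blast
  have j: "tz v \<le> k" using tz_le assms by simp
  then have "(2::nat) ^ k = 2 ^ tz v * 2 ^ (k - tz v)" by (simp add: power_add[symmetric])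
  then have "m < 2 ^ (k - tz v)" using assms m by (metis mult_less_cancel1)
  then have "m + 1 \<le> 2 ^ (k - tz v)" by simp
  then have "2 ^ tz v * (m + 1) \<le> 2 ^ tz v * 2 ^ (k - tz v)" by (rule mult_le_mono2)
  then show ?thesis unfolding par_def using m \<open>(2::nat) ^ k = _\<close> by (simp add: algebra_simps)
qed

lemma tz_par: assumes "0 < v" shows "tz v < tz (par v)"
proof -
  obtain m where m: "odd m" "v = 2 ^ tz v * m" using tz_decomp assms by blast
  obtain m' where m': "m + 1 = 2 * m'" using m(1) by (metis dvd_def odd_even_add odd_one)
  have "m' > 0" using m' by auto
  have "par v = 2 ^ Suc (tz v) * m'" unfolding par_def using m m' by (metis add.commute mult.assoc mult.commute mult_Suc_right power_Suc plus_1_eq_Suc)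
  then have pv: "par v > 0" "par v = 2 ^ Suc (tz v) * m'" using \<open>m' > 0\<close> by auto
  obtain m2 where m2: "odd m2" "par v = 2 ^ tz (par v) * m2" using tz_decomp pv by blast
  show ?thesis
  proof (rule ccontr)
    assume "\<not> ?thesis"
    then obtain a where a: "tz (par v) + a = tz v" by (metis le_Suc_ex not_less)
    then have "2 ^ tz (par v) * m2 = 2 ^ tz (par v) * (2 ^ Suc a * m')" using pv m2
      by (metis add_Suc_right mult.assoc power_add)
    then have "m2 = 2 ^ Suc a * m'" by simp
    then show False using m2 by simp
  qed
qed

lemma child: assumes "0 < v" "i < tz v"
  shows "tz (v - 2 ^ i) = i" "par (v - 2 ^ i) = v" "0 < v - 2 ^ i"
proof -
  obtain m where m: "odd m" "v = 2 ^ tz v * m" using tz_decomp assms by blast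
  have m0: "m \<ge> 1" using m by (cases m) auto
  have "tz v = i + Suc (tz v - i - 1)" using assms by simp
  then have v: "v = 2 ^ i * (2 * 2 ^ (tz v - i - 1) * m)" using m
    by (metis mult.assoc power_add power_Suc)
  define c where "c = 2 * 2 ^ (tz v - i - 1) * m"
  have "2 ^ (tz v - i - 1) * m \<ge> 1" using m0 by simp
  then have c1: "c \<ge> 2" unfolding c_def by linarith
  have ec: "even c" unfolding c_def by simp
  have u: "v - 2 ^ i = 2 ^ i * (c - 1)" using v c_def by (simp add: right_diff_distrib')
  have oc: "odd (c - 1)" using ec c1 by simp
  show t: "tz (v - 2 ^ i) = i" using u oc tz_eq by simp
  have "2 ^ i * 1 \<le> 2 ^ i * c" using c1 by (intro mult_le_mono2) simp
  then have "2 ^ i \<le> v" using v unfolding c_def[symmetric] by simp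
  then show "par (v - 2 ^ i) = v" unfolding par_def t by simp
  show "0 < v - 2 ^ i" using u c1 by simp
qed


lemma vertex_conn:
  fixes n :: nat and B :: "nat \<Rightarrow> nat set"
  assumes B: "B = (\<lambda>t. if t = n then {t} else {t, par t})"
    and E: "E = (\<lambda>v. {v, par v}) ` ({1..n} - {n})" and v: "v \<in> {1..n}"
  shows "connected_in E {t\<in>{1..n}. v \<in> B t}"
proof -
  let ?S = "{t\<in>{1..n}. v \<in> B t}"
  let ?R = "{(a, b). a \<in> ?S \<and> b \<in> ?S \<and> {a, b} \<in> E}"
  have vS: "v \<in> ?S" using v B by auto
  have h: "(t, v) \<in> ?R\<^sup>* \<and> (v, t) \<in> ?R\<^sup>*" if t: "t \<in> ?S" for t
  proof (cases "t = v")
    case True then show ?thesis by simp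
  next
    case False
    then have tn: "t \<noteq> n" "par t = v" using t B by (auto split: if_splits)
    then have "{t, v} \<in> E" using E t by auto
    then have "(t, v) \<in> ?R" "(v, t) \<in> ?R" using t vS by (auto simp: insert_commute)
    then show ?thesis by auto
  qed
  show ?thesis unfolding connected_in_def
    using h by (meson rtrancl_trans)
qed

theorem lemma4:
  fixes n :: nat
  assumes "\<exists>k\<ge>1. n = 2 ^ k"
  shows "\<exists>(E :: nat set set) (d :: nat \<Rightarrow> int).
           simple_graph {1..n} E \<and> treewidth {1..n} E = 1 \<and>
           (\<forall>C. optimal_schedule n E d C \<longrightarrow> real (Cmax n C) = log 2 (real n) + 1)"
proof -
  obtain k where k: "k \<ge> 1" "n = 2 ^ k" using assms by blast
  have "(2::nat) ^ 1 \<le> 2 ^ k" using k(1) by (rule power_increasing) simp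
  then have n2: "n \<ge> 2" using k by simp
  define E where "E = (\<lambda>v. {v, par v}) ` ({1..n} - {n})"
  define d where "d = (\<lambda>v. int (tz v + 1))"
  have hpar: "\<forall>t\<in>{1..n}-{n}. par t \<in> {1..n} \<and> t < par t"
  proof
    fix t assume t: "t \<in> {1..n}-{n}"
    then have "par t \<le> n" using par_le[of t k] k by auto
    then show "par t \<in> {1..n} \<and> t < par t" using t by (auto simp: par_def)
  qed
  have mono: "\<forall>t. t \<le> par t" by (simp add: par_def)
  have tree: "is_tree {1..n} E"
  proof (rule parent_tree[where r=n and q=par])
    show "finite {1..n}" by simp
    show "n \<in> {1..n}" using n2 by simp
    show "\<forall>t\<in>{1..n}-{n}. par t \<in> {1..n} \<and> t < par t" by (rule hpar)
    show "\<forall>t. t \<le> par t" by (rule mono)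
    show "E = (\<lambda>t. {t, par t}) ` ({1..n} - {n})" by (rule E_def)
  qed
  have sg: "simple_graph {1..n} E" using tree by (simp add: is_tree_def)
  define B where "B = (\<lambda>t::nat. if t = n then {t} else {t, par t})"
  have td: "tree_decomposition {1..n} E {1..n} E B"
    unfolding tree_decomposition_def
  proof (intro conjI ballI)
    show "is_tree {1..n} E" by (rule tree)
    fix t assume t: "t \<in> {1..n}"
    show "finite (B t)" by (simp add: B_def)
    show "B t \<subseteq> {1..n}" using t hpar by (auto simp: B_def)
  next
    fix v assume v: "v \<in> {1..n}"
    have "v \<in> B v" unfolding B_def by simp
    then show "\<exists>t\<in>{1..n}. v \<in> B t" using v by blast
    show "connected_in E {t\<in>{1..n}. v \<in> B t}" by (rule vertex_conn[OF B_def E_def v])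
  next
    fix e assume "e \<in> E"
    then obtain v where "v \<in> {1..n} - {n}" "e = {v, par v}" unfolding E_def by blast
    then have "v \<in> {1..n}" "e \<subseteq> B v" unfolding B_def by auto
    then show "\<exists>t\<in>{1..n}. e \<subseteq> B t" by blast
  qed
  have cardB: "\<forall>t\<in>{1..n}. card (B t) \<le> 1 + 1" by (simp add: B_def card_insert_if)
  have tw: "treewidth {1..n} E = 1"
    unfolding treewidth_def
  proof (rule Least_equality)
    show "\<exists>I F B. tree_decomposition {1..n} E I F B \<and> (\<forall>t\<in>I. card (B t) \<le> 1 + 1)"
      using td cardB by blast
  next
    fix w assume "\<exists>I F B. tree_decomposition {1..n} E I F B \<and> (\<forall>t\<in>I. card (B t) \<le> w + 1)"
    then obtain I F B' where dec: "tree_decomposition {1..n} E I F B'" and c: "\<forall>t\<in>I. card (B' t) \<le> w + 1"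
      by blast
    have "{1, par 1} \<in> E" using n2 unfolding E_def by auto
    then obtain t where t: "t \<in> I" "{1, par 1} \<subseteq> B' t" using dec unfolding tree_decomposition_def by blast
    have "finite (B' t)" using dec t unfolding tree_decomposition_def by blast
    then have "card {1, par 1} \<le> card (B' t)" using t card_mono by blast
    moreover have "card {1::nat, par 1} = 2" by (simp add: par_def)
    moreover have "card (B' t) \<le> w + 1" using c t by blast
    ultimately show "1 \<le> w" by linarith
  qed
  have opt: "real (Cmax n C) = log 2 (real n) + 1" if oC: "optimal_schedule n E d C" for C
  proof -
    have edge: "{a, b} \<in> E \<Longrightarrow> C a \<noteq> C b" for a b using oC
      unfolding optimal_schedule_def feasible_schedule_def by blast
    have C1: "\<forall>j\<in>{1..n}. C j \<ge> 1" using oC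
      unfolding optimal_schedule_def feasible_schedule_def by blast
    define C0 where "C0 = (\<lambda>v. tz v + 1)"
    have f0: "feasible_schedule n E C0"
      unfolding feasible_schedule_def
    proof (intro conjI allI impI ballI)
      fix j show "j \<in> {1..n} \<Longrightarrow> 1 \<le> C0 j" by (simp add: C0_def)
    next
      fix i j assume "{i, j} \<in> E"
      then obtain v where v: "v \<in> {1..n} - {n}" "{i, j} = {v, par v}" unfolding E_def by blast
      have "tz v < tz (par v)" using v tz_par by simp
      then show "C0 i \<noteq> C0 j" using v(2) by (auto simp: C0_def doubleton_eq_iff)
    qed
    have L0: "Lmax n d C0 = 0"
    proof -
      have "(\<lambda>j. int (C0 j) - d j) ` {1..n} = (\<lambda>j. 0) ` {1..n}"
        by (rule image_cong) (auto simp: C0_def d_def)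
      moreover have "(\<lambda>j. 0::int) ` {1..n} = {0}" by (rule image_constant[of 1]) (use n2 in simp)
      ultimately have "(\<lambda>j. int (C0 j) - d j) ` {1..n} = {0}" by simp
      then show ?thesis by (simp add: Lmax_def)
    qed
    have "\<forall>C'. feasible_schedule n E C' \<longrightarrow> Lmax n d C \<le> Lmax n d C'"
      using oC unfolding optimal_schedule_def by blast
    then have "Lmax n d C \<le> Lmax n d C0" using f0 by blast
    then have "Lmax n d C \<le> 0" using L0 by simp
    have up: "\<forall>v\<in>{1..n}. C v \<le> tz v + 1"
    proof
      fix v assume v: "v \<in> {1..n}"
      have "int (C v) - d v \<in> (\<lambda>j. int (C j) - d j) ` {1..n}" using v by blast
      then have "int (C v) - d v \<le> Lmax n d C" unfolding Lmax_def by (intro Max_ge) auto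
      then show "C v \<le> tz v + 1" using \<open>Lmax n d C \<le> 0\<close> unfolding d_def by simp
    qed
    have forced: "\<forall>v\<in>{1..n}. tz v = j \<longrightarrow> C v = j + 1" for j
    proof (induction j rule: less_induct)
      case (less j)
      show ?case
      proof (intro ballI impI)
        fix v assume v: "v \<in> {1..n}" "tz v = j"
        have ne: "C v \<noteq> i + 1" if i: "i < j" for i
        proof -
          have ch: "tz (v - 2 ^ i) = i" "par (v - 2 ^ i) = v" "0 < v - 2 ^ i"
            using child[of v i] v i by auto
          have "v - 2 ^ i < v" using ch(3) by simp
          moreover have "v \<le> n" using v by simp
          ultimately have "v - 2 ^ i \<noteq> n" "v - 2 ^ i \<le> n" "1 \<le> v - 2 ^ i" using ch(3) by linarith+
          then have "v - 2 ^ i \<in> {1..n} - {n}" by simp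
          then have "{v - 2 ^ i, v} \<in> E" using ch unfolding E_def by force
          then have "C (v - 2 ^ i) \<noteq> C v" by (rule edge)
          moreover have "C (v - 2 ^ i) = i + 1" using less i ch \<open>v - 2 ^ i \<in> _\<close> by blast
          ultimately show ?thesis by simp
        qed
        have "C v \<ge> 1" "C v \<le> j + 1" using C1 up v by auto
        show "C v = j + 1"
        proof (rule ccontr)
          assume "C v \<noteq> j + 1"
          then have "C v - 1 < j" using \<open>C v \<ge> 1\<close> \<open>C v \<le> j + 1\<close> by linarith
          then have "C v \<noteq> (C v - 1) + 1" by (rule ne)
          then show False using \<open>C v \<ge> 1\<close> by simp
        qed
      qed
    qed
    have Cv: "\<forall>v\<in>{1..n}. C v = tz v + 1" using forced by blast
    have tzn: "tz n = k" using k tz_eq[of 1 k] by simp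
    have "Cmax n C = k + 1"
      unfolding Cmax_def
    proof (rule Max_eqI)
      show "finite (C ` {1..n})" by simp
      fix y assume "y \<in> C ` {1..n}"
      then obtain v where "v \<in> {1..n}" "y = C v" by auto
      then show "y \<le> k + 1" using Cv tz_le[of v k] k by auto
    next
      have nin: "n \<in> {1..n}" using n2 by simp
      then have "C n = k + 1" using Cv tzn by simp
      then show "k + 1 \<in> C ` {1..n}" using nin by (metis rev_image_eqI)
    qed
    then show ?thesis using k by simp
  qed
  show ?thesis using sg tw opt by blast
qed

end
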